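(* Let $m\in\mathbb{N}_+$, $\alpha=(\alpha_1,\dots,\alpha_m)\in(0,1)^m$ and $0<K<\infty$. Let $q\in\mathbb{N}_+$ and $l\in[1,\infty)$ with $q\le l$, and suppose there are $(p_1,\dots,p_m)\in\{1,\dots,q-1\}^m$ such that $|q\alpha_i-p_i|<K/l$ for all $i$, and $\mathbb{Z}/q\mathbb{Z}$ admits an isomorphism $\mathbb{Z}/q\mathbb{Z}\cong\bigoplus_{i=1}^m\mathbb{Z}/l_i\mathbb{Z}$ under which the image of $p_i$ is a generator of the summand $\mathbb{Z}/l_i\mathbb{Z}$, for each $i$. Then, for the action $\mathbb{Z}^m\curvearrowright_\alpha\mathbb{T}^1$, the level $(ql\,\mathbb{T}^1,d_{\mathbb{Z}^m})$ of the warped cone is quasi-isometric to $(\mathbb{T}^1,ld)\times\prod_{i=1}^m(\mathbb{T}^1,l_id)$ (with the $\ell_1$-product metric), with quasi-isometry constants depending only on $m$ and $K$.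
   Context: $\mathbb{T}^1=\mathbb{R}/\mathbb{Z}$ with standard metric $d$ of circumference $1$; $(\mathbb{T}^1,cd)$ is this circle with metric scaled by $c$. The action $\mathbb{Z}^m\curvearrowright_\alpha\mathbb{T}^1$ is $(n_1,\dots,n_m).z=z+\sum_in_i\alpha_i$, with generating set $\{\pm e_1,\dots,\pm e_m\}$ of $\mathbb{Z}^m$. For $t>0$, $d_{\mathbb{Z}^m}$ on $t\mathbb{T}^1$ is the largest metric with $d_{\mathbb{Z}^m}(z,z')\le td(z,z')$ and $d_{\mathbb{Z}^m}(z,z\pm\alpha_j)\le1$ for all $j$. A $(C,A)$-quasi-isometry $f:X\to Y$ satisfies $C^{-1}d(x,x')-A\le d(f(x),f(x'))\le Cd(x,x')+A$ and the $A$-neighbourhood of $f(X)$ is $Y$. *)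

theory Defs
  imports "HOL-Analysis.Analysis" "HOL-Algebra.Product_Groups"
begin

text \<open>The circle T^1 = R/Z, represented by the carrier [0,1) of reals.\<close>
definition T1 :: "real set" where
  "T1 = {0..<1}"

definition circ_dist :: "real \<Rightarrow> real \<Rightarrow> real" where
  "circ_dist x y = \<bar>(x - y) - of_int (round (x - y))\<bar>"

definition rot :: "real \<Rightarrow> real \<Rightarrow> real" where
  "rot a z = frac (z + a)"

text \<open>The metric d_{Z^m} on the level t T^1 of the warped cone of the action
  Z^m acting on T^1 by alpha (generating set {+-e_1,...,+-e_m}):
  the largest metric delta with delta(z,z') \<le> t d(z,z') and
  delta(z, z \<plusminus> alpha_j) \<le> 1 for all j.\<close>
definition warped_level_dist :: "nat \<Rightarrow> (nat \<Rightarrow> real) \<Rightarrow> real \<Rightarrow> real \<Rightarrow> real \<Rightarrow> real" where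
  "warped_level_dist m \<alpha> t z z' =
     Sup {\<delta> z z' | \<delta>. Metric_space T1 \<delta>
        \<and> (\<forall>x\<in>T1. \<forall>y\<in>T1. \<delta> x y \<le> t * circ_dist x y)
        \<and> (\<forall>x\<in>T1. \<forall>j<m. \<delta> x (rot (\<alpha> j) x) \<le> 1 \<and> \<delta> x (rot (- \<alpha> j) x) \<le> 1)}"

definition quasi_isometry ::
  "real \<Rightarrow> real \<Rightarrow> 'a set \<Rightarrow> ('a \<Rightarrow> 'a \<Rightarrow> real) \<Rightarrow> 'b set \<Rightarrow> ('b \<Rightarrow> 'b \<Rightarrow> real) \<Rightarrow> ('a \<Rightarrow> 'b) \<Rightarrow> bool" where
  "quasi_isometry C A X dX Y dY f \<longleftrightarrow>
     f ` X \<subseteq> Y \<and>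
     (\<forall>x\<in>X. \<forall>x'\<in>X. dX x x' / C - A \<le> dY (f x) (f x') \<and> dY (f x) (f x') \<le> C * dX x x' + A) \<and>
     (\<forall>y\<in>Y. \<exists>x\<in>X. dY y (f x) \<le> A)"

definition prod_carrier :: "nat \<Rightarrow> (real \<times> (nat \<Rightarrow> real)) set" where
  "prod_carrier m = T1 \<times> (\<Pi>\<^sub>E i\<in>{..<m}. T1)"

definition l1_prod_dist :: "nat \<Rightarrow> real \<Rightarrow> (nat \<Rightarrow> nat) \<Rightarrow>
    real \<times> (nat \<Rightarrow> real) \<Rightarrow> real \<times> (nat \<Rightarrow> real) \<Rightarrow> real" where
  "l1_prod_dist m l ls u v =
     l * circ_dist (fst u) (fst v) + (\<Sum>i<m. real (ls i) * circ_dist (snd u i) (snd v i))"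

definition summand :: "nat \<Rightarrow> (nat \<Rightarrow> nat) \<Rightarrow> nat \<Rightarrow> (nat \<Rightarrow> int) set" where
  "summand m ls i = {x \<in> carrier (sum_group {..<m} (\<lambda>j. integer_mod_group (ls j))).
                       \<forall>j\<in>{..<m}. j \<noteq> i \<longrightarrow> x j = 0}"

end

theory Submission
  imports Defs
begin


definition cd :: "real \<Rightarrow> real" where "cd r = \<bar>r - of_int (round r)\<bar>"

lemma circ_dist_cd: "circ_dist x y = cd (x - y)"
  by (simp add: circ_dist_def cd_def)

lemma cd_min: "cd r \<le> \<bar>r - of_int n\<bar>"
  unfolding cd_def by (rule round_diff_minimal)

lemma cd_nonneg: "0 \<le> cd r" by (simp add: cd_def)

lemma cd_half: "cd r \<le> 1/2"
  unfolding cd_def by (subst abs_minus_commute) (rule of_int_round_abs_le)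

lemma cd_abs: "cd r \<le> \<bar>r\<bar>"
  using cd_min[of r 0] by simp

lemma cd_shift: assumes "x - y \<in> \<int>" shows "cd x = cd y"
proof -
  from assms obtain k where k: "x - y = of_int k" by (metis Ints_cases)
  have "cd x \<le> cd y"
    using cd_min[of x "round y + k"] k unfolding cd_def by (simp add: algebra_simps)
  moreover have "cd y \<le> cd x"
    using cd_min[of y "round x - k"] k unfolding cd_def by (simp add: algebra_simps)
  ultimately show ?thesis by simp
qed

lemma cd_add_int: "cd (x + of_int k) = cd x"
  by (rule cd_shift) simp

lemma cd_minus_le: "cd (- r) \<le> cd r"
proof -
  have e: "-r - of_int (- round r) = -(r - of_int (round r))" by simp
  have "cd (-r) \<le> \<bar>-r - of_int (- round r)\<bar>" by (rule cd_min)
  also have "\<dots> = \<bar>r - of_int (round r)\<bar>" unfolding e by (rule abs_minus_cancel)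
  finally show ?thesis unfolding cd_def .
qed

lemma cd_minus: "cd (- r) = cd r"
  using cd_minus_le[of r] cd_minus_le[of "-r"] by simp

lemma cd_diff_commute: "cd (x - y) = cd (y - x)"
  by (metis cd_minus minus_diff_eq)

lemma cd_triangle: "cd (a + b) \<le> cd a + cd b"
proof -
  have "cd (a+b) \<le> \<bar>(a+b) - of_int (round a + round b)\<bar>" by (rule cd_min)
  also have "\<dots> \<le> \<bar>a - of_int (round a)\<bar> + \<bar>b - of_int (round b)\<bar>" by simp
  finally show ?thesis by (simp add: cd_def)
qed

lemma cd_triangle_diff: "cd (a - b) \<le> cd a + cd b"
  using cd_triangle[of a "-b"] cd_minus[of b] by simp

lemma cd_mult_int: "cd (of_int n * r) \<le> \<bar>of_int n\<bar> * cd r"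
proof -
  have "cd (of_int n * r) \<le> \<bar>of_int n * r - of_int (n * round r)\<bar>" by (rule cd_min)
  also have "\<dots> = \<bar>of_int n\<bar> * cd r" by (simp add: cd_def abs_mult[symmetric] algebra_simps)
  finally show ?thesis .
qed

lemma cd_zero_Ints: "cd r = 0 \<Longrightarrow> r \<in> \<int>"
  unfolding cd_def by (metis Ints_of_int eq_iff_diff_eq_0 abs_eq_0)

lemma cd_sum: "cd (\<Sum>j\<in>S. f j) \<le> (\<Sum>j\<in>S. cd (f j))"
proof (induction S rule: infinite_finite_induct)
  case (insert x F)
  then show ?case using cd_triangle[of "f x" "sum f F"] by simp
qed (auto simp: cd_def)

lemma frac_frac_add: "frac (frac y + a) = frac (y + a)"
  by (metis add.commute frac_add_simps(1) frac_def diff_add_eq frac_add_of_int_right add_diff_eq)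




definition Pf :: "nat \<Rightarrow> real \<Rightarrow> nat \<Rightarrow> (nat \<Rightarrow> nat) \<Rightarrow> (nat \<Rightarrow> int) \<Rightarrow> real \<Rightarrow> real" where
  "Pf m l q ls n r = l * cd (real q * r) + (\<Sum>i<m. real (ls i) * cd (of_int (n i) * r))"

lemma Pf_nonneg: "l \<ge> 0 \<Longrightarrow> 0 \<le> Pf m l q ls n r"
  unfolding Pf_def by (intro add_nonneg_nonneg sum_nonneg mult_nonneg_nonneg) (auto simp: cd_nonneg)

lemma Pf_minus: "Pf m l q ls n (- r) = Pf m l q ls n r"
proof -
  have "cd (real q * - r) = cd (real q * r)" using cd_minus[of "real q * r"] by simp
  moreover have "cd (of_int (n i) * - r) = cd (of_int (n i) * r)" for i
    using cd_minus[of "of_int (n i) * r"] by simp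
  ultimately show ?thesis unfolding Pf_def by simp
qed

lemma Pf_add: assumes "l \<ge> 0" shows "Pf m l q ls n (a + b) \<le> Pf m l q ls n a + Pf m l q ls n b"
proof -
  have 1: "l * cd (real q * (a+b)) \<le> l * cd (real q * a) + l * cd (real q * b)"
    using cd_triangle[of "real q * a" "real q * b"] assms
    by (simp add: distrib_left[symmetric] mult_left_mono)
  have 2: "real (ls i) * cd (of_int (n i) * (a+b)) \<le> real (ls i) * cd (of_int (n i) * a) + real (ls i) * cd (of_int (n i) * b)" for i
    using cd_triangle[of "of_int (n i) * a" "of_int (n i) * b"]
    by (simp add: distrib_left[symmetric] mult_left_mono)
  have "(\<Sum>i<m. real (ls i) * cd (of_int (n i) * (a+b))) \<le> (\<Sum>i<m. real (ls i) * cd (of_int (n i) * a)) + (\<Sum>i<m. real (ls i) * cd (of_int (n i) * b))"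
    unfolding sum.distrib[symmetric] by (rule sum_mono) (rule 2)
  then show ?thesis using 1 unfolding Pf_def by simp
qed

lemma Pf_shift: "Pf m l q ls n (r + of_int k) = Pf m l q ls n r"
proof -
  have "cd (real q * (r + of_int k)) = cd (real q * r)"
    by (rule cd_shift) (simp add: algebra_simps)
  moreover have "cd (of_int (n i) * (r + of_int k)) = cd (of_int (n i) * r)" for i
    by (rule cd_shift) (simp add: algebra_simps)
  ultimately show ?thesis unfolding Pf_def by simp
qed

lemma Pf_shift': "r - r' \<in> \<int> \<Longrightarrow> Pf m l q ls n r = Pf m l q ls n r'"
proof -
  assume "r - r' \<in> \<int>"
  then obtain k where k: "r - r' = of_int k" by (elim Ints_cases)
  then have "r = r' + of_int k" by simp
  then show ?thesis using Pf_shift by simp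
qed

lemma Pf_zero: "Pf m l q ls n 0 = 0"
  unfolding Pf_def by (simp add: cd_def)

lemma Pf_lip:
  assumes "l \<ge> real q" "\<forall>i<m. 0 \<le> n i \<and> n i < int q" "\<forall>i<m. ls i \<le> q" "l \<ge> 0"
  shows "Pf m l q ls n r \<le> real (Suc m) * (real q * l) * cd r"
proof -
  have c1: "cd (real q * r) \<le> real q * cd r" using cd_mult_int[of "int q" r] by simp
  have 1: "l * cd (real q * r) \<le> real q * l * cd r"
    using mult_left_mono[OF c1 assms(4)] by (simp add: algebra_simps)
  have 2: "real (ls i) * cd (of_int (n i) * r) \<le> real q * l * cd r" if i: "i < m" for i
  proof -
    have "real (ls i) * cd (of_int (n i) * r) \<le> real (ls i) * (\<bar>of_int (n i)\<bar> * cd r)"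
      by (intro mult_left_mono cd_mult_int) auto
    also have "\<dots> \<le> real q * (real q * cd r)"
    proof -
      have a: "real (ls i) \<le> real q" using assms(3) i by auto
      have b: "\<bar>real_of_int (n i)\<bar> * cd r \<le> real q * cd r"
        using assms(2) i by (intro mult_right_mono) (auto simp: cd_nonneg)
      show ?thesis by (rule mult_mono[OF a b]) (auto simp: cd_nonneg)
    qed
    also have "\<dots> \<le> real q * (l * cd r)"
      using assms(1) by (intro mult_left_mono mult_right_mono) (auto simp: cd_nonneg)
    finally show ?thesis by (simp add: algebra_simps)
  qed
  have "(\<Sum>i<m. real (ls i) * cd (of_int (n i) * r)) \<le> (\<Sum>i<m. real q * l * cd r)"
    by (rule sum_mono) (use 2 in auto)
  then show ?thesis using 1 unfolding Pf_def by (simp add: algebra_simps)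
qed




lemma frac_T1: "frac x \<in> T1" by (simp add: T1_def frac_lt_1)

lemma step_pow:
  assumes ms: "Metric_space T1 \<delta>"
    and g: "\<forall>x\<in>T1. \<delta> x (frac (x + b)) \<le> 1"
  shows "x \<in> T1 \<Longrightarrow> \<delta> x (frac (x + of_nat N * b)) \<le> of_nat N"
proof (induction N)
  case 0
  then have "frac x = x" by (simp add: T1_def)
  then show ?case using 0 Metric_space.zero[OF ms, of x x] by simp
next
  case (Suc N)
  let ?y = "frac (x + of_nat N * b)"
  have y: "?y \<in> T1" by (rule frac_T1)
  have e: "frac (x + of_nat (Suc N) * b) = frac (?y + b)"
    by (simp add: frac_frac_add algebra_simps)
  have "\<delta> x (frac (?y + b)) \<le> \<delta> x ?y + \<delta> ?y (frac (?y + b))"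
    using Metric_space.triangle[OF ms Suc.prems y frac_T1] .
  also have "\<dots> \<le> of_nat N + 1" using Suc g y by (intro add_mono) auto
  finally show ?case using e by simp
qed

lemma step_int:
  assumes ms: "Metric_space T1 \<delta>"
    and g1: "\<forall>x\<in>T1. \<delta> x (frac (x + a)) \<le> 1" and g2: "\<forall>x\<in>T1. \<delta> x (frac (x + - a)) \<le> 1"
    and x: "x \<in> T1"
  shows "\<delta> x (frac (x + of_int k * a)) \<le> \<bar>of_int k\<bar>"
proof (cases "k \<ge> 0")
  case True
  then obtain N where "k = int N" by (metis nonneg_eq_int)
  then show ?thesis using step_pow[OF ms g1 x, of N] by simp
next
  case False
  define N where "N = nat (-k)"
  have N: "k = - int N" using False unfolding N_def by simp
  have "frac (x + of_int k * a) = frac (x + of_nat N * (- a))" using N by simp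
  then show ?thesis using step_pow[OF ms g2 x, of N] N by simp
qed

lemma word_bound:
  fixes n :: nat
  assumes ms: "Metric_space T1 \<delta>"
    and gen: "\<forall>x\<in>T1. \<forall>j<m. \<delta> x (rot (\<alpha> j) x) \<le> 1 \<and> \<delta> x (rot (- \<alpha> j) x) \<le> 1"
    and x: "x \<in> T1"
  shows "n \<le> m \<Longrightarrow> \<delta> x (frac (x + (\<Sum>j<n. of_int (g j) * \<alpha> j))) \<le> (\<Sum>j<n. \<bar>of_int (g j)\<bar>)"
proof (induction n)
  case 0
  then have "frac x = x" using x by (simp add: T1_def)
  then show ?case using x Metric_space.zero[OF ms, of x x] by simp
next
  case (Suc n)
  let ?y = "frac (x + (\<Sum>j<n. of_int (g j) * \<alpha> j))"
  have y: "?y \<in> T1" by (rule frac_T1)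
  have e: "frac (x + (\<Sum>j<Suc n. of_int (g j) * \<alpha> j)) = frac (?y + of_int (g n) * \<alpha> n)"
    by (simp add: frac_frac_add algebra_simps)
  have nm: "n < m" using Suc.prems by simp
  have g1: "\<forall>x\<in>T1. \<delta> x (frac (x + \<alpha> n)) \<le> 1" and g2: "\<forall>x\<in>T1. \<delta> x (frac (x + - \<alpha> n)) \<le> 1"
    using gen nm by (auto simp: rot_def)
  have "\<delta> x (frac (?y + of_int (g n) * \<alpha> n)) \<le> \<delta> x ?y + \<delta> ?y (frac (?y + of_int (g n) * \<alpha> n))"
    using Metric_space.triangle[OF ms x y frac_T1] .
  also have "\<dots> \<le> (\<Sum>j<n. \<bar>of_int (g j)\<bar>) + \<bar>of_int (g n)\<bar>"
    using Suc.IH Suc.prems step_int[OF ms g1 g2 y, of "g n"] by (intro add_mono) auto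
  finally show ?case using e by simp
qed

lemma adm_bound:
  fixes m :: nat
  assumes ms: "Metric_space T1 \<delta>"
    and lip: "\<forall>x\<in>T1. \<forall>y\<in>T1. \<delta> x y \<le> t * circ_dist x y"
    and gen: "\<forall>x\<in>T1. \<forall>j<m. \<delta> x (rot (\<alpha> j) x) \<le> 1 \<and> \<delta> x (rot (- \<alpha> j) x) \<le> 1"
    and x: "x \<in> T1" and y: "y \<in> T1"
  shows "\<delta> x y \<le> (\<Sum>j<m. \<bar>of_int (g j)\<bar>) + t * cd (x + (\<Sum>j<m. of_int (g j) * \<alpha> j) - y)"
proof -
  let ?G = "frac (x + (\<Sum>j<m. of_int (g j) * \<alpha> j))"
  have "\<delta> x y \<le> \<delta> x ?G + \<delta> ?G y" using Metric_space.triangle[OF ms x frac_T1 y] .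
  also have "\<dots> \<le> (\<Sum>j<m. \<bar>of_int (g j)\<bar>) + t * circ_dist ?G y"
    using word_bound[OF ms gen x order.refl[of m], of g] lip frac_T1 y by (intro add_mono) auto
  also have "circ_dist ?G y = cd (x + (\<Sum>j<m. of_int (g j) * \<alpha> j) - y)"
    unfolding circ_dist_cd by (rule cd_shift) (simp add: frac_def)
  finally show ?thesis .
qed




lemma cd_int_div:
  assumes "L > 0"
  shows "real L * cd (of_int a / real L) = \<bar>of_int (a - int L * round (of_int a / real L))\<bar>"
proof -
  have "real L * cd (of_int a / real L) = real L * \<bar>of_int a / real L - of_int (round (of_int a / real L))\<bar>"
    by (simp add: cd_def)
  also have "\<dots> = \<bar>real L * (of_int a / real L - of_int (round (of_int a / real L)))\<bar>"
    by (simp add: abs_mult)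
  also have "\<dots> = \<bar>of_int (a - int L * round (of_int a / real L))\<bar>"
    using assms by (simp add: algebra_simps)
  finally show ?thesis .
qed

lemma Pgen:
  fixes m :: nat and K l :: real and q :: nat and \<alpha> :: "nat \<Rightarrow> real" and p :: "nat \<Rightarrow> int"
    and ls :: "nat \<Rightarrow> nat" and n w :: "nat \<Rightarrow> int"
  assumes q1: "q \<ge> 1" and l1: "l \<ge> 1" and ql: "real q \<le> l"
   and ls: "\<forall>i<m. ls i \<ge> 1" and lsq: "\<forall>i<m. ls i \<le> q"
   and nb: "\<forall>i<m. 0 \<le> n i \<and> n i < int q"
   and nw: "\<forall>i<m. \<forall>x::int. of_int (x * n i) / real q - of_int (x * w i) / real (ls i) \<in> \<int>"
   and R2: "\<forall>i<m. \<forall>j<m. int (ls i) dvd (p j * w i - (if i = j then 1 else 0))"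
   and al: "\<forall>j<m. \<bar>real q * \<alpha> j - of_int (p j)\<bar> < K / l"
   and j: "j < m"
  shows "Pf m l q ls n (\<alpha> j) \<le> real (Suc m) * K + 1"
proof -
  let ?e = "real q * \<alpha> j - of_int (p j)"
  have eK: "l * \<bar>?e\<bar> \<le> K"
  proof -
    have "l * \<bar>?e\<bar> \<le> l * (K / l)" using al j l1 by (intro mult_left_mono) auto
    then show ?thesis using l1 by simp
  qed
  have t0: "l * cd (real q * \<alpha> j) \<le> K"
  proof -
    have "cd (real q * \<alpha> j) = cd ?e" by (rule cd_shift) simp
    also have "\<dots> \<le> \<bar>?e\<bar>" by (rule cd_abs)
    finally show ?thesis using eK l1 by (smt (verit) mult_left_mono)
  qed
  have ti: "real (ls i) * cd (of_int (n i) * \<alpha> j) \<le> K + (if i = j then 1 else 0)" if i: "i < m" for i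
  proof -
    have qpos: "real q > 0" using q1 by simp
    have lpos: "ls i \<noteq> 0" using ls i by (metis not_one_le_zero)
    have split: "of_int (n i) * \<alpha> j = of_int (n i) * ?e / real q + of_int (p j * n i) / real q"
      using qpos by (simp add: field_simps)
    have c1: "cd (of_int (n i) * ?e / real q) \<le> \<bar>?e\<bar>"
    proof -
      have "cd (of_int (n i) * ?e / real q) \<le> \<bar>of_int (n i) * ?e / real q\<bar>" by (rule cd_abs)
      also have "\<dots> = (of_int (n i) / real q) * \<bar>?e\<bar>" using nb i qpos by (simp add: abs_mult)
      also have "\<dots> \<le> 1 * \<bar>?e\<bar>" using nb i qpos by (intro mult_right_mono) auto
      finally show ?thesis by simp
    qed
    have c2: "cd (of_int (p j * n i) / real q) \<le> (if i = j then 1 else 0) / real (ls i)"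
    proof -
      have "cd (of_int (p j * n i) / real q) = cd (of_int (p j * w i) / real (ls i))"
        by (rule cd_shift) (use nw i in auto)
      also have "\<dots> = cd ((if i = j then 1 else 0) / real (ls i))"
      proof (rule cd_shift)
        obtain h where h: "p j * w i - (if i = j then 1 else 0) = int (ls i) * h"
          using R2 i j by (meson dvdE)
        have "of_int (p j * w i) / real (ls i) - (if i = j then 1 else 0) / real (ls i)
            = of_int (p j * w i - (if i = j then 1 else 0)) / real (ls i)"
          by (simp add: diff_divide_distrib)
        also have "\<dots> = of_int h" unfolding h using ls i by (auto simp: less_eq_Suc_le[symmetric])
        finally show "of_int (p j * w i) / real (ls i) - (if i = j then 1 else 0) / real (ls i) \<in> \<int>"
          by simp
      qed
      also have "\<dots> \<le> \<bar>(if i = j then 1 else 0) / real (ls i)\<bar>" by (rule cd_abs)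
      finally show ?thesis by simp
    qed
    have "cd (of_int (n i) * \<alpha> j) \<le> \<bar>?e\<bar> + (if i = j then 1 else 0) / real (ls i)"
      using cd_triangle[of "of_int (n i) * ?e / real q" "of_int (p j * n i) / real q"] c1 c2 split
      by simp
    then have "real (ls i) * cd (of_int (n i) * \<alpha> j) \<le> real (ls i) * (\<bar>?e\<bar> + (if i = j then 1 else 0) / real (ls i))"
      by (intro mult_left_mono) auto
    also have "\<dots> = real (ls i) * \<bar>?e\<bar> + (if i = j then 1 else 0)" using lpos by (simp add: algebra_simps)
    also have "\<dots> \<le> l * \<bar>?e\<bar> + (if i = j then 1 else 0)"
      using lsq i ql by (intro add_mono mult_right_mono) auto
    also have "\<dots> \<le> K + (if i = j then 1 else 0)" using eK by simp
    finally show ?thesis .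
  qed
  have "(\<Sum>i<m. real (ls i) * cd (of_int (n i) * \<alpha> j)) \<le> (\<Sum>i<m. K + (if i = j then 1 else 0))"
    by (rule sum_mono) (use ti in auto)
  also have "\<dots> = real m * K + 1" using j by (simp add: sum.distrib)
  finally show ?thesis using t0 unfolding Pf_def by (simp add: algebra_simps)
qed




lemma g_exists:
  fixes m :: nat and K l :: real and q :: nat and \<alpha> :: "nat \<Rightarrow> real" and p :: "nat \<Rightarrow> int"
    and ls :: "nat \<Rightarrow> nat" and n w :: "nat \<Rightarrow> int" and x y :: real
  assumes K: "0 < K" and q1: "q \<ge> 1" and l1: "l \<ge> 1" and ql: "real q \<le> l"
   and ls: "\<forall>i<m. ls i \<ge> 1" and lsq: "\<forall>i<m. ls i \<le> q"
   and nb: "\<forall>i<m. 0 \<le> n i \<and> n i < int q"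
   and nw: "\<forall>i<m. \<forall>x::int. of_int (x * n i) / real q - of_int (x * w i) / real (ls i) \<in> \<int>"
   and R2: "\<forall>i<m. \<forall>j<m. int (ls i) dvd (p j * w i - (if i = j then 1 else 0))"
   and R3: "\<forall>x. (\<forall>i<m. int (ls i) dvd x * w i) \<longrightarrow> int q dvd x"
   and al: "\<forall>j<m. \<bar>real q * \<alpha> j - of_int (p j)\<bar> < K / l"
  shows "\<exists>g. (\<Sum>j<m. \<bar>of_int (g j)\<bar>) + (real q * l) * cd (x + (\<Sum>j<m. of_int (g j) * \<alpha> j) - y)
           \<le> ((1 + K) * real (Suc m) + 1) * Pf m l q ls n (x - y)"
proof -
  define r where "r = y - x"
  define k where "k = round (real q * r)"
  define s where "s = real q * r - of_int k"
  define g where "g i = k * w i - int (ls i) * round (of_int (k * w i) / real (ls i))" for i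
  have qpos: "real q > 0" using q1 by simp
  have lpos: "ls i \<noteq> 0" if "i < m" for i using ls that by (metis not_one_le_zero)
  have s_cd: "\<bar>s\<bar> = cd (real q * r)" unfolding s_def k_def cd_def by simp
  have Pr: "Pf m l q ls n (x - y) = Pf m l q ls n r"
    unfolding r_def using Pf_minus[of m l q ls n "y - x"] by simp
  have Pr_eq: "Pf m l q ls n r = l * \<bar>s\<bar> + (\<Sum>i<m. real (ls i) * cd (of_int (n i) * r))"
    unfolding Pf_def s_cd ..
  have gi: "\<bar>of_int (g i)\<bar> \<le> real (ls i) * cd (of_int (n i) * r) + l * \<bar>s\<bar>" if i: "i < m" for i
  proof -
    have "\<bar>of_int (g i)\<bar> = real (ls i) * cd (of_int (k * w i) / real (ls i))"
      unfolding g_def using cd_int_div[of "ls i" "k * w i"] lpos[OF i] by simp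
    also have "cd (of_int (k * w i) / real (ls i)) = cd (of_int (k * n i) / real q)"
      by (rule cd_shift) (metis Ints_minus minus_diff_eq i nw)
    also have "of_int (k * n i) / real q = of_int (n i) * r - of_int (n i) * s / real q"
      unfolding s_def using qpos by (simp add: field_simps)
    also have "cd (of_int (n i) * r - of_int (n i) * s / real q) \<le> cd (of_int (n i) * r) + \<bar>s\<bar>"
    proof -
      have "\<bar>of_int (n i) * s / real q\<bar> = (of_int (n i) / real q) * \<bar>s\<bar>"
        using nb i qpos by (simp add: abs_mult)
      also have "\<dots> \<le> 1 * \<bar>s\<bar>" using nb i qpos by (intro mult_right_mono) auto
      finally have "cd (of_int (n i) * s / real q) \<le> \<bar>s\<bar>"
        using cd_abs[of "of_int (n i) * s / real q"] by simp
      then show ?thesis using cd_triangle_diff[of "of_int (n i) * r" "of_int (n i) * s / real q"] by simp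
    qed
    then have "real (ls i) * cd (of_int (n i) * r - of_int (n i) * s / real q)
        \<le> real (ls i) * (cd (of_int (n i) * r) + \<bar>s\<bar>)" by (intro mult_left_mono) auto
    also have "\<dots> \<le> real (ls i) * cd (of_int (n i) * r) + l * \<bar>s\<bar>"
    proof -
      have "real (ls i) \<le> l" using lsq i ql by (metis of_nat_le_iff order_trans)
      then have "real (ls i) * \<bar>s\<bar> \<le> l * \<bar>s\<bar>" by (intro mult_right_mono) auto
      then show ?thesis by (simp add: algebra_simps)
    qed
    finally show ?thesis .
  qed
  have sumg: "(\<Sum>j<m. \<bar>of_int (g j)\<bar>) \<le> real (Suc m) * Pf m l q ls n r"
  proof -
    have "(\<Sum>j<m. \<bar>of_int (g j)\<bar>) \<le> (\<Sum>i<m. real (ls i) * cd (of_int (n i) * r) + l * \<bar>s\<bar>)"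
      by (rule sum_mono) (use gi in auto)
    also have "\<dots> = (\<Sum>i<m. real (ls i) * cd (of_int (n i) * r)) + real m * (l * \<bar>s\<bar>)"
      by (simp add: sum.distrib)
    also have "\<dots> \<le> Pf m l q ls n r + real m * Pf m l q ls n r"
    proof (intro add_mono mult_left_mono)
      show "(\<Sum>i<m. real (ls i) * cd (of_int (n i) * r)) \<le> Pf m l q ls n r"
        unfolding Pr_eq using l1 by simp
      show "l * \<bar>s\<bar> \<le> Pf m l q ls n r"
        unfolding Pr_eq by (simp add: sum_nonneg cd_nonneg)
    qed auto
    finally show ?thesis by (simp add: algebra_simps)
  qed
  have "int q dvd (\<Sum>j<m. g j * p j) - k"
  proof -
    have "int (ls i) dvd ((\<Sum>j<m. g j * p j) - k) * w i" if i: "i < m" for i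
    proof -
      have e: "((\<Sum>j<m. g j * p j) - k) * w i
          = (\<Sum>j<m. g j * (p j * w i - (if i = j then 1 else 0))) + (g i - k * w i)"
      proof -
        have a: "(\<Sum>j<m. g j * (p j * w i - (if i = j then 1 else 0)))
            = (\<Sum>j<m. g j * p j * w i) - (\<Sum>j<m. g j * (if i = j then 1 else 0))"
          unfolding sum_subtractf[symmetric] by (rule sum.cong) (simp_all add: right_diff_distrib mult.assoc)
        have b: "(\<Sum>j<m. g j * (if i = j then 1 else 0)) = g i"
          using i by (simp add: if_distrib[of "\<lambda>t. g _ * t"] sum.delta cong: if_cong)
        have c: "((\<Sum>j<m. g j * p j) - k) * w i = (\<Sum>j<m. g j * p j * w i) - k * w i"
          by (simp add: sum_distrib_right left_diff_distrib)
        show ?thesis unfolding c a b by simp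
      qed
      have d1: "int (ls i) dvd (\<Sum>j<m. g j * (p j * w i - (if i = j then 1 else 0)))"
        using R2 i by (intro dvd_sum dvd_mult) auto
      have d2: "int (ls i) dvd (g i - k * w i)" unfolding g_def by simp
      show ?thesis unfolding e using d1 d2 by (rule dvd_add)
    qed
    then show ?thesis using R3 by blast
  qed
  then obtain M where M: "(\<Sum>j<m. g j * p j) - k = int q * M" by (elim dvdE)
  have arg: "x + (\<Sum>j<m. of_int (g j) * \<alpha> j) - y
      = (\<Sum>j<m. of_int (g j) * ((real q * \<alpha> j - of_int (p j)) / real q)) - s / real q + of_int M"
  proof -
    have M': "(\<Sum>j<m. of_int (g j) * of_int (p j)) = of_int k + real q * of_int M"
      using arg_cong[OF M, of real_of_int] by (simp add: algebra_simps)
    have "(\<Sum>j<m. of_int (g j) * ((real q * \<alpha> j - of_int (p j)) / real q))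
        = (\<Sum>j<m. of_int (g j) * \<alpha> j) - (\<Sum>j<m. of_int (g j) * of_int (p j)) / real q"
    proof -
      have "(\<Sum>j<m. of_int (g j) * ((real q * \<alpha> j - of_int (p j)) / real q))
          = (\<Sum>j<m. of_int (g j) * \<alpha> j - of_int (g j) * of_int (p j) / real q)"
        by (rule sum.cong) (use qpos in \<open>simp_all add: field_simps\<close>)
      also have "\<dots> = (\<Sum>j<m. of_int (g j) * \<alpha> j) - (\<Sum>j<m. of_int (g j) * of_int (p j)) / real q"
        by (simp add: sum_subtractf sum_divide_distrib)
      finally show ?thesis .
    qed
    then show ?thesis unfolding M' s_def r_def using qpos by (simp add: field_simps)
  qed
  have cdb: "(real q * l) * cd (x + (\<Sum>j<m. of_int (g j) * \<alpha> j) - y)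
      \<le> K * (\<Sum>j<m. \<bar>of_int (g j)\<bar>) + l * \<bar>s\<bar>"
  proof -
    let ?S = "(\<Sum>j<m. of_int (g j) * ((real q * \<alpha> j - of_int (p j)) / real q))"
    have "cd (x + (\<Sum>j<m. of_int (g j) * \<alpha> j) - y) = cd (?S - s / real q)"
      unfolding arg by (rule cd_add_int)
    also have "\<dots> \<le> \<bar>?S - s / real q\<bar>" by (rule cd_abs)
    also have "\<dots> \<le> (\<Sum>j<m. \<bar>of_int (g j)\<bar> * (\<bar>real q * \<alpha> j - of_int (p j)\<bar> / real q)) + \<bar>s\<bar> / real q"
    proof -
      have "\<bar>?S\<bar> \<le> (\<Sum>j<m. \<bar>of_int (g j) * ((real q * \<alpha> j - of_int (p j)) / real q)\<bar>)"
        by (rule sum_abs)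
      also have "\<dots> = (\<Sum>j<m. \<bar>of_int (g j)\<bar> * (\<bar>real q * \<alpha> j - of_int (p j)\<bar> / real q))"
        using qpos by (simp add: abs_mult)
      finally show ?thesis using qpos by (simp add: abs_triangle_ineq4 order_trans[OF abs_triangle_ineq4])
    qed
    finally have c: "cd (x + (\<Sum>j<m. of_int (g j) * \<alpha> j) - y)
       \<le> (\<Sum>j<m. \<bar>of_int (g j)\<bar> * (\<bar>real q * \<alpha> j - of_int (p j)\<bar> / real q)) + \<bar>s\<bar> / real q" .
    have "(real q * l) * cd (x + (\<Sum>j<m. of_int (g j) * \<alpha> j) - y)
       \<le> (real q * l) * ((\<Sum>j<m. \<bar>of_int (g j)\<bar> * (\<bar>real q * \<alpha> j - of_int (p j)\<bar> / real q)) + \<bar>s\<bar> / real q)"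
      using c qpos l1 by (intro mult_left_mono) auto
    also have "\<dots> = (\<Sum>j<m. \<bar>of_int (g j)\<bar> * (l * \<bar>real q * \<alpha> j - of_int (p j)\<bar>)) + l * \<bar>s\<bar>"
      using qpos by (simp add: algebra_simps sum_distrib_left)
    also have "\<dots> \<le> (\<Sum>j<m. \<bar>of_int (g j)\<bar> * K) + l * \<bar>s\<bar>"
    proof -
      have "l * \<bar>real q * \<alpha> j - of_int (p j)\<bar> \<le> K" if "j < m" for j
      proof -
        have "l * \<bar>real q * \<alpha> j - of_int (p j)\<bar> \<le> l * (K / l)" using al that l1 by (intro mult_left_mono) auto
        then show ?thesis using l1 by simp
      qed
      then show ?thesis using l1 by (intro add_mono sum_mono mult_left_mono) auto
    qed
    finally show ?thesis by (simp add: sum_distrib_left mult.commute)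
  qed
  have ls_le: "l * \<bar>s\<bar> \<le> Pf m l q ls n r" unfolding Pr_eq by (simp add: sum_nonneg cd_nonneg)
  have "(\<Sum>j<m. \<bar>of_int (g j)\<bar>) + (real q * l) * cd (x + (\<Sum>j<m. of_int (g j) * \<alpha> j) - y)
      \<le> (1 + K) * (\<Sum>j<m. \<bar>of_int (g j)\<bar>) + Pf m l q ls n r"
    using cdb ls_le by (simp add: algebra_simps)
  also have "\<dots> \<le> (1 + K) * (real (Suc m) * Pf m l q ls n r) + Pf m l q ls n r"
    using sumg K by (intro add_mono mult_left_mono) auto
  also have "\<dots> = ((1 + K) * real (Suc m) + 1) * Pf m l q ls n (x - y)"
    unfolding Pr by (simp add: algebra_simps)
  finally show ?thesis by blast
qed




lemma surj_part:
  fixes m :: nat and l :: real and q :: nat and ls :: "nat \<Rightarrow> nat" and n w :: "nat \<Rightarrow> int"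
  assumes q1: "q \<ge> 1" and ls: "\<forall>i<m. ls i \<ge> 1"
   and nw: "\<forall>i<m. \<forall>x::int. of_int (x * n i) / real q - of_int (x * w i) / real (ls i) \<in> \<int>"
   and R4: "\<forall>y. \<exists>x. \<forall>i<m. int (ls i) dvd (x * w i - y i)"
   and u: "u \<in> prod_carrier m"
  shows "\<exists>z\<in>T1. l1_prod_dist m l ls u (frac (real q * z), \<lambda>i\<in>{..<m}. frac (of_int (n i) * z)) \<le> real m"
proof -
  obtain y0 Y where uY: "u = (y0, Y)" by (cases u)
  have qpos: "real q > 0" using q1 by simp
  define R where "R i = round (real (ls i) * (Y i - of_int (n i) * y0 / real q))" for i
  obtain x where x: "\<forall>i<m. int (ls i) dvd (x * w i - R i)" using R4 by blast
  define z where "z = frac ((of_int x + y0) / real q)"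
  define fl where "fl = floor ((of_int x + y0) / real q)"
  have qz: "real q * z = of_int x + y0 - real q * of_int fl"
    unfolding z_def fl_def frac_def using qpos by (simp add: field_simps)
  have t0: "cd (y0 - frac (real q * z)) = 0"
  proof -
    have k: "y0 - frac (real q * z) = of_int (floor (real q * z) - x + int q * fl)"
      unfolding frac_def qz by simp
    show ?thesis unfolding k cd_def round_of_int by simp
  qed
  have ti: "real (ls i) * cd (Y i - frac (of_int (n i) * z)) \<le> 1" if i: "i < m" for i
  proof -
    have lpos: "real (ls i) > 0" using ls i by (simp add: less_eq_Suc_le)
    obtain h where h: "x * w i - R i = int (ls i) * h" using x i by (meson dvdE)
    define v where "v = Y i - of_int (n i) * y0 / real q"
    have nz: "of_int (n i) * z = of_int (n i) * (of_int x + y0) / real q - of_int (n i * fl)"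
      unfolding z_def fl_def frac_def using qpos by (simp add: field_simps)
    have e: "(Y i - frac (of_int (n i) * z)) - (v - of_int (R i) / real (ls i))
       = of_int (floor (of_int (n i) * z) + n i * fl - h)
         - (of_int (x * n i) / real q - of_int (x * w i) / real (ls i))"
    proof -
      have hr: "of_int (x * w i) / real (ls i) - of_int (R i) / real (ls i) = of_int h"
        using arg_cong[OF h, of real_of_int] lpos by (simp add: field_simps)
      show ?thesis unfolding frac_def nz v_def using hr qpos lpos
        by (simp add: field_simps)
    qed
    have "cd (Y i - frac (of_int (n i) * z)) = cd (v - of_int (R i) / real (ls i))"
    proof (rule cd_shift)
      show "Y i - frac (of_int (n i) * z) - (v - of_int (R i) / real (ls i)) \<in> \<int>"
        unfolding e by (rule Ints_diff[OF Ints_of_int]) (use nw i in blast)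
    qed
    also have "\<dots> \<le> \<bar>v - of_int (R i) / real (ls i)\<bar>" by (rule cd_abs)
    finally have c: "cd (Y i - frac (of_int (n i) * z)) \<le> \<bar>v - of_int (R i) / real (ls i)\<bar>" .
    have "real (ls i) * \<bar>v - of_int (R i) / real (ls i)\<bar> = \<bar>real (ls i) * v - of_int (R i)\<bar>"
      using lpos by (simp add: abs_mult[symmetric] field_simps)
    also have "\<dots> = cd (real (ls i) * v)" unfolding R_def v_def cd_def by simp
    also have "\<dots> \<le> 1/2" by (rule cd_half)
    finally have "real (ls i) * \<bar>v - of_int (R i) / real (ls i)\<bar> \<le> 1/2" .
    moreover have "real (ls i) * cd (Y i - frac (of_int (n i) * z)) \<le> real (ls i) * \<bar>v - of_int (R i) / real (ls i)\<bar>"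
      using c lpos by (intro mult_left_mono) auto
    ultimately show ?thesis by linarith
  qed
  have "l1_prod_dist m l ls u (frac (real q * z), \<lambda>i\<in>{..<m}. frac (of_int (n i) * z))
      = (\<Sum>i<m. real (ls i) * cd (Y i - frac (of_int (n i) * z)))"
    unfolding l1_prod_dist_def uY circ_dist_cd using t0 by simp
  also have "\<dots> \<le> (\<Sum>i<m. 1)" by (rule sum_mono) (use ti in auto)
  also have "\<dots> = real m" by simp
  finally have "l1_prod_dist m l ls u (frac (real q * z), \<lambda>i\<in>{..<m}. frac (of_int (n i) * z)) \<le> real m" .
  moreover have "z \<in> T1" unfolding z_def by (rule frac_T1)
  ultimately show ?thesis by blast
qed

lemma real_main:
  fixes m :: nat and K l :: real and q :: nat and \<alpha> :: "nat \<Rightarrow> real" and p :: "nat \<Rightarrow> int"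
    and ls :: "nat \<Rightarrow> nat" and n w :: "nat \<Rightarrow> int"
  assumes K: "0 < K" and q1: "q \<ge> 1" and l1: "l \<ge> 1" and ql: "real q \<le> l"
   and ls: "\<forall>i<m. ls i \<ge> 1" and lsq: "\<forall>i<m. ls i \<le> q"
   and nb: "\<forall>i<m. 0 \<le> n i \<and> n i < int q"
   and nw: "\<forall>i<m. \<forall>x::int. of_int (x * n i) / real q - of_int (x * w i) / real (ls i) \<in> \<int>"
   and R2: "\<forall>i<m. \<forall>j<m. int (ls i) dvd (p j * w i - (if i = j then 1 else 0))"
   and R3: "\<forall>x. (\<forall>i<m. int (ls i) dvd x * w i) \<longrightarrow> int q dvd x"
   and R4: "\<forall>y. \<exists>x. \<forall>i<m. int (ls i) dvd (x * w i - y i)"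
   and al: "\<forall>j<m. \<bar>real q * \<alpha> j - of_int (p j)\<bar> < K / l"
  shows "quasi_isometry (2 * real (Suc m) * (K + 1)) (real m) T1 (warped_level_dist m \<alpha> (real q * l))
           (prod_carrier m) (l1_prod_dist m l ls)
           (\<lambda>z. (frac (real q * z), \<lambda>i\<in>{..<m}. frac (of_int (n i) * z)))"
proof -
  define t where "t = real q * l"
  define C where "C = 2 * real (Suc m) * (K + 1)"
  define P where "P = Pf m l q ls n"
  define F where "F = (\<lambda>z. (frac (real q * z), \<lambda>i\<in>{..<m}. frac (of_int (n i) * z)))"
  define adm where "adm \<delta> \<longleftrightarrow> Metric_space T1 \<delta>
        \<and> (\<forall>x\<in>T1. \<forall>y\<in>T1. \<delta> x y \<le> t * circ_dist x y)
        \<and> (\<forall>x\<in>T1. \<forall>j<m. \<delta> x (rot (\<alpha> j) x) \<le> 1 \<and> \<delta> x (rot (- \<alpha> j) x) \<le> 1)" for \<delta>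
  have Dd: "warped_level_dist m \<alpha> t x y = Sup {\<delta> x y | \<delta>. adm \<delta>}" for x y
    unfolding warped_level_dist_def adm_def ..
  have qpos: "real q > 0" using q1 by simp
  have t1: "t \<ge> 1" unfolding t_def using q1 l1
    by (metis mult_mono' of_nat_1 of_nat_le_iff mult_1 zero_le_one)
  have Cpos: "C > 0" unfolding C_def using K by simp
  have P_nonneg: "0 \<le> P r" for r unfolding P_def using l1 by (intro Pf_nonneg) auto
  have distF: "l1_prod_dist m l ls (F x) (F y) = P (x - y)" for x y
  proof -
    have a: "cd (frac (real q * x) - frac (real q * y)) = cd (real q * (x - y))"
      by (rule cd_shift) (simp add: frac_def algebra_simps)
    have b: "cd (frac (of_int (n i) * x) - frac (of_int (n i) * y)) = cd (of_int (n i) * (x - y))" for i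
      by (rule cd_shift) (simp add: frac_def algebra_simps)
    show ?thesis unfolding l1_prod_dist_def F_def P_def Pf_def circ_dist_cd using a b by simp
  qed
  define lam where "lam = 1 / C"
  have lampos: "lam > 0" unfolding lam_def using Cpos by simp
  define \<delta>0 where "\<delta>0 x y = lam * P (x - y) + cd (x - y) / 2" for x y
  have Plip: "P r \<le> real (Suc m) * t * cd r" for r
    unfolding P_def t_def using Pf_lip[of q l m n ls r] ql nb lsq l1 by auto
  have Palpha: "P (\<alpha> j) \<le> real (Suc m) * K + 1" if "j < m" for j
    unfolding P_def using Pgen[OF q1 l1 ql ls lsq nb nw R2 al that] .
  have adm0: "adm \<delta>0"
  proof -
    have ms: "Metric_space T1 \<delta>0"
    proof (unfold_locales)
      fix x y
      show "0 \<le> \<delta>0 x y" unfolding \<delta>0_def using lampos P_nonneg cd_nonneg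
        by (simp add: add_nonneg_nonneg)
      show "\<delta>0 x y = \<delta>0 y x" unfolding \<delta>0_def P_def
        using Pf_minus[of m l q ls n "x - y"] cd_diff_commute[of x y] by simp
    next
      fix x y assume x: "x \<in> T1" and y: "y \<in> T1"
      show "\<delta>0 x y = 0 \<longleftrightarrow> x = y"
      proof
        assume "\<delta>0 x y = 0"
        moreover have "0 \<le> lam * P (x - y)" using lampos P_nonneg[of "x-y"] by simp
        ultimately have "cd (x - y) = 0" unfolding \<delta>0_def using cd_nonneg[of "x-y"] by linarith
        then have "x - y \<in> \<int>" by (rule cd_zero_Ints)
        then obtain k where k: "x - y = of_int k" by (elim Ints_cases)
        have "\<bar>x - y\<bar> < 1" using x y by (auto simp: T1_def)
        then have "k = 0" using k by simp
        then show "x = y" using k by simp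
      next
        assume "x = y" then show "\<delta>0 x y = 0" unfolding \<delta>0_def P_def by (simp add: Pf_zero cd_def)
      qed
    next
      fix x y z
      have "P (x - z) \<le> P (x - y) + P (y - z)"
        using Pf_add[of l m q ls n "x - y" "y - z"] l1 unfolding P_def by simp
      moreover have "cd (x - z) \<le> cd (x - y) + cd (y - z)"
        using cd_triangle[of "x - y" "y - z"] by simp
      moreover have "lam * P (x - z) \<le> lam * (P (x - y) + P (y - z))"
        using calculation(1) lampos by (intro mult_left_mono) auto
      ultimately show "\<delta>0 x z \<le> \<delta>0 x y + \<delta>0 y z"
        unfolding \<delta>0_def by (simp add: distrib_left)
    qed
    have lip: "\<delta>0 x y \<le> t * circ_dist x y" for x y
    proof -
      have "lam * P (x - y) \<le> lam * (real (Suc m) * t * cd (x - y))"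
        using Plip lampos by (intro mult_left_mono) auto
      also have "lam * (real (Suc m) * t * cd (x - y)) \<le> (t * cd (x - y)) / 2"
      proof -
        let ?X = "real (Suc m) * t * cd (x - y)"
        have X0: "0 \<le> ?X" using t1 cd_nonneg[of "x - y"] by simp
        have "?X \<le> (K + 1) * ?X"
        proof -
          have "0 \<le> K * ?X" using X0 K by (metis less_imp_le mult_nonneg_nonneg)
          then show ?thesis by (simp add: distrib_right)
        qed
        also have "(K + 1) * ?X = C * (t * cd (x - y) / 2)" unfolding C_def by (simp add: algebra_simps)
        finally have "?X \<le> C * (t * cd (x - y) / 2)" .
        then have "?X / C \<le> t * cd (x - y) / 2" using Cpos by (simp add: pos_divide_le_eq mult.commute)
        then show ?thesis unfolding lam_def by simp
      qed
      finally have a: "lam * P (x - y) \<le> t * cd (x - y) / 2" .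
      have b: "cd (x - y) / 2 \<le> t * cd (x - y) / 2" using t1 cd_nonneg[of "x - y"]
        by (simp add: mult_le_cancel_right1)
      show ?thesis unfolding \<delta>0_def circ_dist_cd using a b by simp
    qed
    have gen: "\<delta>0 x (rot a x) \<le> 1" if a: "a = \<alpha> j \<or> a = - \<alpha> j" and j: "j < m" for x a j
    proof -
      have "P (x - rot a x) = P (- a)"
        unfolding P_def rot_def by (rule Pf_shift') (simp add: frac_def)
      also have "\<dots> = P (\<alpha> j)" using a unfolding P_def using Pf_minus by auto
      finally have e: "P (x - rot a x) = P (\<alpha> j)" .
      have "lam * P (\<alpha> j) \<le> lam * (real (Suc m) * K + 1)"
        using Palpha[OF j] lampos by (intro mult_left_mono) auto
      also have "\<dots> \<le> 1/2"
      proof -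
        have "real (Suc m) * K + 1 \<le> C / 2" unfolding C_def by (simp add: algebra_simps)
        then have "lam * (real (Suc m) * K + 1) \<le> lam * (C / 2)" using lampos by (intro mult_left_mono) auto
        also have "lam * (C / 2) = 1/2" unfolding lam_def using Cpos by simp
        finally show ?thesis .
      qed
      finally have "lam * P (x - rot a x) \<le> 1/2" using e by simp
      moreover have "cd (x - rot a x) / 2 \<le> 1/4" using cd_half[of "x - rot a x"] by simp
      ultimately show ?thesis unfolding \<delta>0_def by simp
    qed
    show ?thesis unfolding adm_def using ms lip gen by blast
  qed
  have bdd: "bdd_above {\<delta> x y | \<delta>. adm \<delta>}" if "x \<in> T1" "y \<in> T1" for x y
    unfolding bdd_above_def adm_def using that by blast
  have lower: "P (x - y) \<le> C * warped_level_dist m \<alpha> t x y" if x: "x \<in> T1" and y: "y \<in> T1" for x y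
  proof -
    have "\<delta>0 x y \<le> warped_level_dist m \<alpha> t x y"
      unfolding Dd by (rule cSup_upper) (use adm0 bdd[OF x y] in auto)
    moreover have "lam * P (x - y) \<le> \<delta>0 x y" unfolding \<delta>0_def using cd_nonneg[of "x - y"] by simp
    ultimately have "lam * P (x - y) \<le> warped_level_dist m \<alpha> t x y" by linarith
    then show ?thesis unfolding lam_def using Cpos by (simp add: field_simps)
  qed
  have upper: "warped_level_dist m \<alpha> t x y \<le> C * P (x - y)" if x: "x \<in> T1" and y: "y \<in> T1" for x y
  proof -
    obtain g where g: "(\<Sum>j<m. \<bar>of_int (g j)\<bar>) + (real q * l) * cd (x + (\<Sum>j<m. of_int (g j) * \<alpha> j) - y)
           \<le> ((1 + K) * real (Suc m) + 1) * Pf m l q ls n (x - y)"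
      using g_exists[OF K q1 l1 ql ls lsq nb nw R2 R3 al, of x y] by blast
    have c: "((1 + K) * real (Suc m) + 1) * P (x - y) \<le> C * P (x - y)"
      unfolding C_def using P_nonneg[of "x - y"] K by (intro mult_right_mono) (auto simp: field_simps)
    have "Sup {\<delta> x y | \<delta>. adm \<delta>} \<le> C * P (x - y)"
    proof (rule cSup_least)
      show "{\<delta> x y | \<delta>. adm \<delta>} \<noteq> {}" using adm0 by blast
    next
      fix v assume "v \<in> {\<delta> x y | \<delta>. adm \<delta>}"
      then obtain \<delta> where v: "v = \<delta> x y" and ad: "adm \<delta>" by blast
      have "\<delta> x y \<le> (\<Sum>j<m. \<bar>of_int (g j)\<bar>) + t * cd (x + (\<Sum>j<m. of_int (g j) * \<alpha> j) - y)"
        using ad x y unfolding adm_def by (intro adm_bound) auto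
      then show "v \<le> C * P (x - y)" using g c unfolding v t_def P_def by linarith
    qed
    then show ?thesis unfolding Dd .
  qed
  have img: "F ` T1 \<subseteq> prod_carrier m"
  proof (rule image_subsetI)
    fix z assume "z \<in> T1"
    have "(\<lambda>i\<in>{..<m}. frac (of_int (n i) * z)) \<in> (\<Pi>\<^sub>E i\<in>{..<m}. T1)"
      by (rule restrict_PiE_iff[THEN iffD2]) (simp add: frac_T1)
    then show "F z \<in> prod_carrier m" unfolding F_def prod_carrier_def by (simp add: frac_T1)
  qed
  have surj: "\<forall>u\<in>prod_carrier m. \<exists>x\<in>T1. l1_prod_dist m l ls u (F x) \<le> real m"
    unfolding F_def using surj_part[OF q1 ls nw R4] by blast
  have qi: "\<forall>x\<in>T1. \<forall>x'\<in>T1. warped_level_dist m \<alpha> t x x' / C - real m \<le> l1_prod_dist m l ls (F x) (F x')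
      \<and> l1_prod_dist m l ls (F x) (F x') \<le> C * warped_level_dist m \<alpha> t x x' + real m"
  proof (intro ballI conjI)
    fix x x' assume x: "x \<in> T1" and x': "x' \<in> T1"
    show "warped_level_dist m \<alpha> t x x' / C - real m \<le> l1_prod_dist m l ls (F x) (F x')"
    proof -
      have "warped_level_dist m \<alpha> t x x' / C \<le> P (x - x')"
        using upper[OF x x'] Cpos by (simp add: divide_le_eq mult.commute)
      then show ?thesis unfolding distF by simp
    qed
    show "l1_prod_dist m l ls (F x) (F x') \<le> C * warped_level_dist m \<alpha> t x x' + real m"
      unfolding distF using lower[OF x x'] by simp
  qed
  show ?thesis unfolding quasi_isometry_def C_def[symmetric] t_def[symmetric] F_def[symmetric]
    using img qi surj by blast
qed




lemma sum_pow_nat: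
  fixes ls :: "nat \<Rightarrow> nat" and m :: nat
  defines "S \<equiv> sum_group {..<m} (\<lambda>i. integer_mod_group (ls i))"
  assumes x: "x \<in> carrier S" and i: "i < m"
  shows "(x [^]\<^bsub>S\<^esub> (n::nat)) i = (int n * x i) mod int (ls i)"
proof -
  have grp: "group S" unfolding S_def by simp
  show ?thesis
proof (induction n)
  case 0
  have "x [^]\<^bsub>S\<^esub> (0::nat) = \<one>\<^bsub>S\<^esub>" by (rule monoid.nat_pow_0[OF group.is_monoid[OF grp]])
  then show ?case unfolding S_def using i by simp
next
  case (Suc n)
  have "x [^]\<^bsub>S\<^esub> Suc n = x [^]\<^bsub>S\<^esub> n \<otimes>\<^bsub>S\<^esub> x"
    by (rule monoid.nat_pow_Suc[OF group.is_monoid[OF grp]])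
  then have "(x [^]\<^bsub>S\<^esub> Suc n) i = ((x [^]\<^bsub>S\<^esub> n) i + x i) mod int (ls i)"
    unfolding S_def using i by simp
  also have "\<dots> = (int (Suc n) * x i) mod int (ls i)"
    by (simp add: Suc.IH mod_add_right_eq distrib_right add.commute)
  finally show ?case .
qed
qed

lemma sum_pow_int:
  fixes ls :: "nat \<Rightarrow> nat" and m :: nat
  defines "S \<equiv> sum_group {..<m} (\<lambda>i. integer_mod_group (ls i))"
  assumes x: "x \<in> carrier S" and i: "i < m"
  shows "(x [^]\<^bsub>S\<^esub> (k::int)) i = (k * x i) mod int (ls i)"
proof (cases "k < 0")
  case True
  have grp: "group S" unfolding S_def by simp
  have xc: "x [^]\<^bsub>S\<^esub> nat (-k) \<in> carrier S"
    using x by (rule monoid.nat_pow_closed[OF group.is_monoid[OF grp]])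
  have "(x [^]\<^bsub>S\<^esub> k) i = (inv\<^bsub>S\<^esub> (x [^]\<^bsub>S\<^esub> nat (-k))) i"
    using True by (simp only: int_pow_def2 if_True)
  also have "\<dots> = inv\<^bsub>integer_mod_group (ls i)\<^esub> ((x [^]\<^bsub>S\<^esub> nat (-k)) i)"
    using xc i unfolding S_def by simp
  also have "\<dots> = (- ((x [^]\<^bsub>S\<^esub> nat (-k)) i)) mod int (ls i)"
  proof (rule inv_integer_mod_group)
    have "carrier S \<subseteq> (\<Pi>\<^sub>E i\<in>{..<m}. carrier (integer_mod_group (ls i)))"
      unfolding S_def by (simp add: carrier_sum_group)
    then show "(x [^]\<^bsub>S\<^esub> nat (-k)) i \<in> carrier (integer_mod_group (ls i))"
      using xc i by (auto simp: PiE_iff)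
  qed
  also have "\<dots> = (- ((int (nat (-k)) * x i) mod int (ls i))) mod int (ls i)"
    using sum_pow_nat[OF x[unfolded S_def] i, of "nat (-k)"] unfolding S_def by simp
  also have "\<dots> = (k * x i) mod int (ls i)"
    using True by (simp add: mod_minus_eq)
  finally show ?thesis .
next
  case False
  then have "x [^]\<^bsub>S\<^esub> k = x [^]\<^bsub>S\<^esub> nat k" by (simp only: int_pow_def2 if_False)
  then show ?thesis using sum_pow_nat[OF x[unfolded S_def] i, of "nat k"] False unfolding S_def
    by simp
qed

lemma alg:
  fixes q :: nat and ls :: "nat \<Rightarrow> nat" and p :: "nat \<Rightarrow> int" and m :: nat
  defines "S \<equiv> sum_group {..<m} (\<lambda>i. integer_mod_group (ls i))"
  assumes q: "q \<ge> 2" and ls: "\<forall>i<m. ls i \<ge> 1"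
    and iso: "\<phi> \<in> iso (integer_mod_group q) S"
    and gen: "\<forall>i<m. \<phi> (p i) \<in> summand m ls i \<and> generate S {\<phi> (p i)} = summand m ls i"
    and pr: "\<forall>i<m. 1 \<le> p i \<and> p i \<le> int q - 1"
  shows "\<exists>c u v. (\<forall>x::int. int q dvd x \<longleftrightarrow> (\<forall>i<m. int (ls i) dvd x * c i))
     \<and> (\<forall>y. \<exists>x. \<forall>i<m. (x * c i) mod int (ls i) = y i mod int (ls i))
     \<and> (\<forall>i<m. \<forall>j<m. (p j * c i) mod int (ls i) = (if i = j then u i else 0) mod int (ls i))
     \<and> (\<forall>i<m. (u i * v i) mod int (ls i) = 1 mod int (ls i))
     \<and> (\<forall>i<m. int (ls i) dvd int q * c i)"
proof -
  let ?G = "integer_mod_group q"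
  have grpS: "group S" unfolding S_def by simp
  have grpG: "group ?G" by simp
  have hom: "\<phi> \<in> hom ?G S" and bij: "bij_betw \<phi> (carrier ?G) (carrier S)"
    using iso by (auto simp: iso_def)
  have carG: "carrier ?G = {0..<int q}" using q by (simp add: carrier_integer_mod_group)
  have carS: "carrier S = (\<Pi>\<^sub>E i\<in>{..<m}. {0..<int (ls i)})"
  proof -
    have "carrier S = {x \<in> \<Pi>\<^sub>E i\<in>{..<m}. carrier (integer_mod_group (ls i)). finite {i \<in> {..<m}. x i \<noteq> \<one>\<^bsub>integer_mod_group (ls i)\<^esub>}}"
      unfolding S_def by (simp add: carrier_sum_group)
    also have "\<dots> = (\<Pi>\<^sub>E i\<in>{..<m}. {0..<int (ls i)})"
      using ls by (auto simp: carrier_integer_mod_group PiE_iff extensional_def)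
    finally show ?thesis .
  qed
  have one_S: "\<one>\<^bsub>S\<^esub> = (\<lambda>i\<in>{..<m}. 0)" unfolding S_def by simp
  have one_G: "(1::int) \<in> carrier ?G" using q by simp
  define c where "c i = \<phi> 1 i" for i
  have phi1: "\<phi> 1 \<in> carrier S" using hom one_G by (auto simp: hom_def)
  have phi_small: "\<phi> x i = (x * c i) mod int (ls i)" if "x \<in> {0..<int q}" "i < m" for x i
  proof -
    have "x = 1 [^]\<^bsub>?G\<^esub> nat x" using that by simp
    then have "\<phi> x = \<phi> 1 [^]\<^bsub>S\<^esub> nat x"
      using hom_nat_pow[OF hom one_G grpG grpS] by metis
    then show ?thesis using sum_pow_nat[OF phi1[unfolded S_def] that(2), of "nat x"] that
      unfolding S_def c_def by simp
  qed
  have phi0: "\<phi> 0 = \<one>\<^bsub>S\<^esub>"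
    using hom_one[OF hom grpG grpS] by simp
  have I5: "int (ls i) dvd int q * c i" if "i < m" for i
  proof -
    have "1 [^]\<^bsub>?G\<^esub> q = (0::int)" by simp
    then have "\<phi> 1 [^]\<^bsub>S\<^esub> q = \<one>\<^bsub>S\<^esub>"
      using hom_nat_pow[OF hom one_G grpG grpS, of q] phi0 by metis
    then have "(int q * c i) mod int (ls i) = 0"
      using sum_pow_nat[OF phi1[unfolded S_def] that, of q] that one_S
      unfolding S_def c_def by simp
    then show ?thesis by (simp add: dvd_eq_mod_eq_0)
  qed
  have phi_gen: "\<phi> (x mod int q) i = (x * c i) mod int (ls i)" if im: "i < m" for x i
  proof -
    have "\<phi> (x mod int q) i = ((x mod int q) * c i) mod int (ls i)"
      using phi_small[OF _ that] q by simp
    also have "\<dots> = (x * c i) mod int (ls i)"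
    proof -
      obtain h where h: "int q * c i = int (ls i) * h" using I5[OF im] by (auto simp: dvd_def)
      have e: "x mod int q = x - int q * (x div int q)" by (simp add: minus_mult_div_eq_mod)
      have "x mod int q * c i = x * c i - (int q * c i) * (x div int q)"
        unfolding e by (simp add: algebra_simps)
      also have "\<dots> = x * c i + int (ls i) * (- h * (x div int q))" using h by simp
      finally have eq: "x mod int q * c i = x * c i + int (ls i) * (- h * (x div int q))" .
      show ?thesis unfolding eq by (rule mod_mult_self2)
    qed
    finally show ?thesis .
  qed
  have I1: "int q dvd x \<longleftrightarrow> (\<forall>i<m. int (ls i) dvd x * c i)" for x
  proof
    assume "int q dvd x"
    then have "x mod int q = 0" by simp
    then show "\<forall>i<m. int (ls i) dvd x * c i"
      using phi_gen[of _ x] phi0 one_S by (auto simp: dvd_eq_mod_eq_0)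
  next
    assume A: "\<forall>i<m. int (ls i) dvd x * c i"
    have xc: "x mod int q \<in> carrier ?G" using q carG by simp
    have "\<phi> (x mod int q) \<in> carrier S" using hom xc by (auto simp: hom_def)
    then have mem: "\<phi> (x mod int q) \<in> (\<Pi>\<^sub>E i\<in>{..<m}. {0..<int (ls i)})" unfolding carS .
    have "\<phi> (x mod int q) = \<one>\<^bsub>S\<^esub>"
      unfolding one_S
    proof (rule ext)
      fix i
      show "\<phi> (x mod int q) i = (\<lambda>i\<in>{..<m}. 0) i"
      proof (cases "i < m")
        case True
        then show ?thesis using A phi_gen[OF True, of x] by (simp add: dvd_eq_mod_eq_0)
      next
        case False
        then show ?thesis using PiE_arb[OF mem, of i] by simp
      qed
    qed
    then have "\<phi> (x mod int q) = \<phi> 0" using phi0 by simp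
    then have "x mod int q = 0"
      using bij xc by (auto simp: bij_betw_def inj_on_def)
    then show "int q dvd x" by (simp add: dvd_eq_mod_eq_0)
  qed
  have I2: "\<exists>x. \<forall>i<m. (x * c i) mod int (ls i) = y i mod int (ls i)" for y
  proof -
    let ?Y = "\<lambda>i\<in>{..<m}. y i mod int (ls i)"
    have "?Y \<in> carrier S" unfolding carS
    proof (rule restrict_PiE_iff[THEN iffD2], intro ballI)
      fix i assume "i \<in> {..<m}"
      then have "0 < int (ls i)" using ls by auto
      then show "y i mod int (ls i) \<in> {0..<int (ls i)}" by simp
    qed
    then have "?Y \<in> \<phi> ` carrier ?G" using bij by (simp add: bij_betw_def)
    then obtain x where xc: "x \<in> carrier ?G" and xY': "?Y = \<phi> x" by (rule imageE)
    note xY = xY'[symmetric]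
    have "x mod int q = x" using xc carG by simp
    then have pY: "\<phi> (x mod int q) = ?Y" using xY by simp
    have "\<forall>i<m. (x * c i) mod int (ls i) = y i mod int (ls i)"
    proof (intro allI impI)
      fix i assume i: "i < m"
      have "(x * c i) mod int (ls i) = \<phi> (x mod int q) i" using phi_gen[OF i] by simp
      also have "\<dots> = y i mod int (ls i)" using pY i by simp
      finally show "(x * c i) mod int (ls i) = y i mod int (ls i)" .
    qed
    then show ?thesis by (rule exI)
  qed
  define u where "u i = \<phi> (p i) i" for i
  have I3: "(p j * c i) mod int (ls i) = (if i = j then u i else 0) mod int (ls i)"
    if "i < m" "j < m" for i j
  proof -
    have pj: "p j \<in> {0..<int q}" using pr that by auto
    have "\<phi> (p j) i = (p j * c i) mod int (ls i)" using phi_small[OF pj that(1)] .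
    moreover have "i \<noteq> j \<Longrightarrow> \<phi> (p j) i = 0" using gen that by (auto simp: summand_def)
    ultimately show ?thesis unfolding u_def by auto
  qed
  have I4: "\<exists>k. (u i * k) mod int (ls i) = 1 mod int (ls i)" if "i < m" for i
  proof -
    let ?E = "\<lambda>j\<in>{..<m}. if j = i then 1 mod int (ls i) else 0"
    have "?E \<in> carrier S" unfolding carS using ls by (auto simp: PiE_iff)
    then have "?E \<in> summand m ls i" unfolding summand_def S_def by auto
    moreover have pc: "\<phi> (p i) \<in> carrier S" using gen that unfolding summand_def S_def by auto
    ultimately have "?E \<in> generate S {\<phi> (p i)}" using gen that by simp
    then obtain k :: int where "?E = \<phi> (p i) [^]\<^bsub>S\<^esub> k"
      using group.generate_pow[OF grpS pc] by auto
    then have "?E i = (k * \<phi> (p i) i) mod int (ls i)"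
      using sum_pow_int[OF pc[unfolded S_def] that] by (simp add: S_def)
    then show ?thesis using that unfolding u_def by (auto simp: mult.commute)
  qed
  then obtain v where "\<forall>i<m. (u i * v i) mod int (ls i) = 1 mod int (ls i)" by metis
  then show ?thesis using I1 I2 I3 I5 by blast
qed




lemma modeq_dvd: "(a::int) mod L = b mod L \<Longrightarrow> L dvd (a - b)"
  by (simp add: mod_eq_dvd_iff)

lemma glue:
  fixes m :: nat and K l :: real and q :: nat and \<alpha> :: "nat \<Rightarrow> real" and p :: "nat \<Rightarrow> int"
    and ls :: "nat \<Rightarrow> nat"
  assumes m1: "m \<ge> 1" and K: "0 < K" and q1: "q \<ge> 1" and l1: "l \<ge> 1" and ql: "real q \<le> l"
   and pr: "\<forall>i<m. 1 \<le> p i \<and> p i \<le> int q - 1 \<and> \<bar>real q * \<alpha> i - real_of_int (p i)\<bar> < K / l"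
   and ls: "\<forall>i<m. ls i \<ge> 1"
   and iso: "\<phi> \<in> iso (integer_mod_group q) (sum_group {..<m} (\<lambda>i. integer_mod_group (ls i)))"
   and gen: "\<forall>i<m. \<phi> (p i) \<in> summand m ls i \<and>
                   generate (sum_group {..<m} (\<lambda>j. integer_mod_group (ls j))) {\<phi> (p i)}
                     = summand m ls i"
  shows "\<exists>f. quasi_isometry (2 * real (Suc m) * (K + 1)) (real m) T1 (warped_level_dist m \<alpha> (real q * l))
              (prod_carrier m) (l1_prod_dist m l ls) f"
proof -
  have q2: "q \<ge> 2"
  proof -
    have "1 \<le> p 0 \<and> p 0 \<le> int q - 1" using pr m1 by auto
    then have "int q \<ge> 2" by linarith
    then show ?thesis by simp
  qed
  have pr': "\<forall>i<m. 1 \<le> p i \<and> p i \<le> int q - 1" using pr by blast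
  obtain c u v where
    I1: "\<forall>x::int. int q dvd x \<longleftrightarrow> (\<forall>i<m. int (ls i) dvd x * c i)" and
    I2: "\<forall>y. \<exists>x. \<forall>i<m. (x * c i) mod int (ls i) = y i mod int (ls i)" and
    I3: "\<forall>i<m. \<forall>j<m. (p j * c i) mod int (ls i) = (if i = j then u i else 0) mod int (ls i)" and
    I4: "\<forall>i<m. (u i * v i) mod int (ls i) = 1 mod int (ls i)" and
    I5: "\<forall>i<m. int (ls i) dvd int q * c i"
    using alg[OF q2 ls iso gen pr'] by blast
  have I4': "int (ls i) dvd (u i * v i - 1)" if "i < m" for i using modeq_dvd[OF I4[rule_format, OF that]] by simp
  define w where "w i = c i * v i" for i
  define n where "n i = ((int q div int (ls i)) * w i) mod int q" for i
  have lsdq: "int (ls i) dvd int q" if i: "i < m" for i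
  proof -
    obtain x where x: "\<forall>i<m. (x * c i) mod int (ls i) = 1 mod int (ls i)" using I2[rule_format, of "\<lambda>_. 1"] by auto
    have d1: "int (ls i) dvd (x * c i - 1)" using modeq_dvd[OF x[rule_format, OF i]] .
    have e: "int q = x * (int q * c i) - int q * (x * c i - 1)" by (simp add: algebra_simps)
    have a1: "int (ls i) dvd x * (int q * c i)" using I5[rule_format, OF i] by (rule dvd_mult)
    have a2: "int (ls i) dvd int q * (x * c i - 1)" using d1 by (rule dvd_mult)
    show ?thesis by (subst e) (rule dvd_diff[OF a1 a2])
  qed
  have lsq: "\<forall>i<m. ls i \<le> q"
  proof (intro allI impI)
    fix i assume i: "i < m"
    have "ls i dvd q" using lsdq[OF i] by (simp only: of_nat_dvd_iff)
    then show "ls i \<le> q" using q1 by (intro dvd_imp_le) auto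
  qed
  have nb: "\<forall>i<m. 0 \<le> n i \<and> n i < int q" unfolding n_def using q1 by simp
  have nw: "\<forall>i<m. \<forall>x::int. of_int (x * n i) / real q - of_int (x * w i) / real (ls i) \<in> \<int>"
  proof (intro allI impI)
    fix i x assume i: "i < m"
    define a where "a = (int q div int (ls i)) * w i"
    have na: "n i = a - int q * (a div int q)" unfolding n_def a_def by (simp add: minus_mult_div_eq_mod)
    have lpos: "real (ls i) > 0" using ls i by (simp add: less_eq_Suc_le)
    have qpos: "real q > 0" using q1 by simp
    have qd: "real_of_int (int q div int (ls i)) = real q / real (ls i)"
      using lsdq[OF i] lpos by (auto elim!: dvdE simp: field_simps)
    have "of_int (x * n i) / real q - of_int (x * w i) / real (ls i) = of_int (- (x * (a div int q)))"
      unfolding na a_def using qd qpos lpos by (simp add: field_simps)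
    then show "of_int (x * n i) / real q - of_int (x * w i) / real (ls i) \<in> \<int>" by simp
  qed
  have R2: "\<forall>i<m. \<forall>j<m. int (ls i) dvd (p j * w i - (if i = j then 1 else 0))"
  proof (intro allI impI)
    fix i j assume i: "i < m" and j: "j < m"
    have d: "int (ls i) dvd (p j * c i - (if i = j then u i else 0))"
      using modeq_dvd[OF I3[rule_format, OF i j]] .
    then have d': "int (ls i) dvd (p j * c i - (if i = j then u i else 0)) * v i" by simp
    show "int (ls i) dvd (p j * w i - (if i = j then 1 else 0))"
    proof (cases "i = j")
      case True
      have e: "p j * w i - (if i = j then 1 else 0) = (p j * c i - (if i = j then u i else 0)) * v i + (u i * v i - 1)"
        using True unfolding w_def by (simp add: algebra_simps)
      show ?thesis by (subst e) (rule dvd_add[OF d' I4'[OF i]])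
    next
      case False
      then show ?thesis using d' unfolding w_def by (simp add: algebra_simps)
    qed
  qed
  have R3: "\<forall>x. (\<forall>i<m. int (ls i) dvd x * w i) \<longrightarrow> int q dvd x"
  proof (intro allI impI)
    fix x assume A: "\<forall>i<m. int (ls i) dvd x * w i"
    have "int (ls i) dvd x * c i" if i: "i < m" for i
    proof -
      have e: "x * c i = (x * w i) * u i - (x * c i) * (u i * v i - 1)" unfolding w_def by (simp add: algebra_simps)
      have a1: "int (ls i) dvd (x * w i) * u i" using A[rule_format, OF i] by (rule dvd_mult2)
      have a2: "int (ls i) dvd (x * c i) * (u i * v i - 1)" using I4'[OF i] by (rule dvd_mult)
      show ?thesis by (subst e) (rule dvd_diff[OF a1 a2])
    qed
    then show "int q dvd x" using I1 by blast
  qed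
  have R4: "\<forall>y. \<exists>x. \<forall>i<m. int (ls i) dvd (x * w i - y i)"
  proof
    fix y :: "nat \<Rightarrow> int"
    obtain x where x: "\<forall>i<m. (x * c i) mod int (ls i) = (y i * u i) mod int (ls i)" using I2[rule_format, of "\<lambda>i. y i * u i"] by auto
    have "int (ls i) dvd (x * w i - y i)" if i: "i < m" for i
    proof -
      have d1: "int (ls i) dvd (x * c i - y i * u i)" using modeq_dvd[OF x[rule_format, OF i]] .
      have e: "x * w i - y i = (x * c i - y i * u i) * v i + y i * (u i * v i - 1)"
        unfolding w_def by (simp add: algebra_simps)
      have a1: "int (ls i) dvd (x * c i - y i * u i) * v i" using d1 by (rule dvd_mult2)
      have a2: "int (ls i) dvd y i * (u i * v i - 1)" using I4'[OF i] by (rule dvd_mult)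
      show ?thesis by (subst e) (rule dvd_add[OF a1 a2])
    qed
    then show "\<exists>x. \<forall>i<m. int (ls i) dvd (x * w i - y i)" by blast
  qed
  have al: "\<forall>j<m. \<bar>real q * \<alpha> j - of_int (p j)\<bar> < K / l" using pr by blast
  show ?thesis using real_main[OF K q1 l1 ql ls lsq nb nw R2 R3 R4 al] by blast
qed


theorem lemmaA5:
  fixes m :: nat and K :: real
  assumes "m \<ge> 1" and "0 < K"
  shows "\<exists>C A. C \<ge> 1 \<and> A \<ge> 0 \<and>
    (\<forall>(\<alpha> :: nat \<Rightarrow> real) (q :: nat) (l :: real) (p :: nat \<Rightarrow> int) (ls :: nat \<Rightarrow> nat).
       (\<forall>i<m. 0 < \<alpha> i \<and> \<alpha> i < 1) \<longrightarrow>
       q \<ge> 1 \<longrightarrow> l \<ge> 1 \<longrightarrow> real q \<le> l \<longrightarrow>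
       (\<forall>i<m. 1 \<le> p i \<and> p i \<le> int q - 1 \<and> \<bar>real q * \<alpha> i - real_of_int (p i)\<bar> < K / l) \<longrightarrow>
       (\<forall>i<m. ls i \<ge> 1) \<longrightarrow>
       (\<exists>\<phi>. \<phi> \<in> iso (integer_mod_group q) (sum_group {..<m} (\<lambda>i. integer_mod_group (ls i))) \<and>
            (\<forall>i<m. \<phi> (p i) \<in> summand m ls i \<and>
                   generate (sum_group {..<m} (\<lambda>j. integer_mod_group (ls j))) {\<phi> (p i)}
                     = summand m ls i)) \<longrightarrow>
       (\<exists>f. quasi_isometry C A T1 (warped_level_dist m \<alpha> (real q * l))
              (prod_carrier m) (l1_prod_dist m l ls) f))"
proof (rule exI[of _ "2 * real (Suc m) * (K + 1)"], rule exI[of _ "real m"], intro conjI allI impI)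
  have h: "1 * 1 \<le> real (Suc m) * (K + 1)"
    using assms(2) by (intro mult_mono) auto
  have "1 \<le> 2 * (real (Suc m) * (K + 1))" using h by linarith
  then show "1 \<le> 2 * real (Suc m) * (K + 1)" by (simp only: mult.assoc)
  show "0 \<le> real m" by simp
next
  fix \<alpha> :: "nat \<Rightarrow> real" and q :: nat and l :: real and p :: "nat \<Rightarrow> int" and ls :: "nat \<Rightarrow> nat"
  assume a01: "\<forall>i<m. 0 < \<alpha> i \<and> \<alpha> i < 1" and q1: "q \<ge> 1" and l1: "l \<ge> 1" and ql: "real q \<le> l"
    and pr: "\<forall>i<m. 1 \<le> p i \<and> p i \<le> int q - 1 \<and> \<bar>real q * \<alpha> i - real_of_int (p i)\<bar> < K / l"
    and ls: "\<forall>i<m. ls i \<ge> 1"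
    and ex: "\<exists>\<phi>. \<phi> \<in> iso (integer_mod_group q) (sum_group {..<m} (\<lambda>i. integer_mod_group (ls i))) \<and>
            (\<forall>i<m. \<phi> (p i) \<in> summand m ls i \<and>
                   generate (sum_group {..<m} (\<lambda>j. integer_mod_group (ls j))) {\<phi> (p i)}
                     = summand m ls i)"
  then obtain \<phi> where iso: "\<phi> \<in> iso (integer_mod_group q) (sum_group {..<m} (\<lambda>i. integer_mod_group (ls i)))"
    and gen: "\<forall>i<m. \<phi> (p i) \<in> summand m ls i \<and>
                   generate (sum_group {..<m} (\<lambda>j. integer_mod_group (ls j))) {\<phi> (p i)}
                     = summand m ls i" by blast
  show "\<exists>f. quasi_isometry (2 * real (Suc m) * (K + 1)) (real m) T1 (warped_level_dist m \<alpha> (real q * l))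
              (prod_carrier m) (l1_prod_dist m l ls) f"
    by (rule glue[OF assms(1) assms(2) q1 l1 ql pr ls iso gen])
qed

end
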